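(* For rational $\delta>0$ let $e(\delta)$ be the least integer $e$ with $2^{-e}<\delta$, and let $g(m,\delta)=(m-1)e(\delta)+\frac{(m-1)m}{2}$. Define $\bar g(x,k,0)=x+k+1$ and $\bar g(x,k,i+1)=g(\bar g(x,k,i),1/k)$. Then for each $i\in\mathbb{N}$: (i) $\bar g(x,k,i)\le (x+k+i+1)^{2^i}$ whenever $x\ge k>0$; (ii) for every $k\ge1$ and every nonempty finite $X\subseteq\mathbb{N}$, if $|X|>\bar g(\min X,k,i)$ then $X$ is $(\omega,k,i)$-persistent.
   Context: Strings are finite binary strings with $\preceq$ the initial-segment order; $2^i$ also denotes the set of strings of length $i$; a tree is a set of strings closed under initial segments; a leaf of a finite tree is a $\preceq$-maximal element. For finite $X=\{x_0<\dots<x_n\}$, a finite tree $T$ is $X$-quasistrong if $T\cap 2^{x_i}\ne\emptyset$ for all $i\le n$ and for each $i<n$ every $\sigma\in T\cap2^{x_i}$ has exactly two incompatible extensions in $T\cap 2^{x_{i+1}}$. $X$ is $\omega$-large if $|X|>\min X$. Persistence with $\alpha=\omega$: for $k\ge1$ and nonempty finite $X$, $X$ is $(\omega,k,0)$-persistent iff $X$ is $\omega$-large; for $i\ge1$, $X$ is $(\omega,k,i)$-persistent iff $X$ contains an $(\omega,k,i-1)$-persistent subset $Y$ such that for every $X$-quasistrong tree $T$ and every coloring $C:T\cap 2^{\max X}\to k$ there exist $c<k$ and a $Y$-quasistrong finite tree $S\subseteq T$ such that every leaf of $S$ has an extension in $C^{-1}(c)$. *)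

theory Defs
  imports Complex_Main "HOL-Library.Sublist"
begin

definition is_tree :: "bool list set \<Rightarrow> bool" where
  "is_tree T \<longleftrightarrow> (\<forall>\<sigma>\<in>T. \<forall>\<tau>. prefix \<tau> \<sigma> \<longrightarrow> \<tau> \<in> T)"

definition is_leaf :: "bool list set \<Rightarrow> bool list \<Rightarrow> bool" where
  "is_leaf S \<sigma> \<longleftrightarrow> \<sigma> \<in> S \<and> \<not> (\<exists>\<tau>\<in>S. strict_prefix \<sigma> \<tau>)"

definition consec :: "nat set \<Rightarrow> nat \<Rightarrow> nat \<Rightarrow> bool" where
  "consec X x y \<longleftrightarrow> x \<in> X \<and> y \<in> X \<and> x < y \<and> \<not> (\<exists>z\<in>X. x < z \<and> z < y)"

definition quasistrong :: "nat set \<Rightarrow> bool list set \<Rightarrow> bool" where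
  "quasistrong X T \<longleftrightarrow> finite T \<and> is_tree T \<and>
     (\<forall>x\<in>X. \<exists>\<sigma>\<in>T. length \<sigma> = x) \<and>
     (\<forall>x y. consec X x y \<longrightarrow>
        (\<forall>\<sigma>\<in>T. length \<sigma> = x \<longrightarrow>
           (\<exists>\<tau>1 \<tau>2. \<tau>1 \<noteq> \<tau>2 \<and>
              {\<tau>\<in>T. length \<tau> = y \<and> prefix \<sigma> \<tau>} = {\<tau>1, \<tau>2} \<and>
              \<not> prefix \<tau>1 \<tau>2 \<and> \<not> prefix \<tau>2 \<tau>1)))"

definition omega_large :: "nat set \<Rightarrow> bool" where
  "omega_large X \<longleftrightarrow> card X > Min X"

fun persistent :: "nat \<Rightarrow> nat \<Rightarrow> nat set \<Rightarrow> bool" where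
  "persistent k 0 X \<longleftrightarrow> finite X \<and> X \<noteq> {} \<and> omega_large X"
| "persistent k (Suc i) X \<longleftrightarrow> finite X \<and> X \<noteq> {} \<and>
     (\<exists>Y. Y \<subseteq> X \<and> persistent k i Y \<and>
        (\<forall>T C. quasistrong X T \<longrightarrow>
           (\<forall>\<sigma>\<in>T. length \<sigma> = Max X \<longrightarrow> C \<sigma> < k) \<longrightarrow>
           (\<exists>c<k. \<exists>S. S \<subseteq> T \<and> quasistrong Y S \<and>
              (\<forall>\<sigma>. is_leaf S \<sigma> \<longrightarrow>
                 (\<exists>\<tau>\<in>T. length \<tau> = Max X \<and> prefix \<sigma> \<tau> \<and> C \<tau> = c)))))"

definition eexp :: "rat \<Rightarrow> int" where
  "eexp \<delta> = (LEAST e::int. power_int (2::rat) (- e) < \<delta>)"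

definition gfun :: "int \<Rightarrow> rat \<Rightarrow> int" where
  "gfun m \<delta> = (m - 1) * eexp \<delta> + ((m - 1) * m) div 2"

fun gbar :: "nat \<Rightarrow> nat \<Rightarrow> nat \<Rightarrow> int" where
  "gbar x k 0 = int x + int k + 1"
| "gbar x k (Suc i) = gfun (gbar x k i) (1 / of_nat k)"

end

theory Submission
  imports Defs
begin

lemma pre_eq: "prefix a b \<Longrightarrow> length a = length b \<Longrightarrow> a = b"
  by (auto simp: prefix_def)

lemma take_pre: "prefix s t \<Longrightarrow> length s \<le> l \<Longrightarrow> prefix s (take l t)"
  by (auto simp: prefix_def)

lemma pre_cmp_le: "prefix a c \<Longrightarrow> prefix b c \<Longrightarrow> length a \<le> length b \<Longrightarrow> prefix a b"
  by (metis prefix_same_cases pre_eq prefix_length_le order_antisym)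

lemma same_len_pre: "prefix a c \<Longrightarrow> prefix b c \<Longrightarrow> length a = length b \<Longrightarrow> a = b"
  using pre_cmp_le pre_eq by (metis order_refl)

lemma cmp_prefix: "prefix r p \<or> prefix p r \<Longrightarrow> length p \<le> length r \<Longrightarrow> prefix p r"
  using pre_eq prefix_length_le by fastforce

definition extp :: "bool list set \<Rightarrow> (bool list \<Rightarrow> bool) \<Rightarrow> bool list \<Rightarrow> nat \<Rightarrow> bool list set" where
  "extp T P \<sigma> l = {\<tau>\<in>T. length \<tau> = l \<and> prefix \<sigma> \<tau> \<and> P \<tau>}"

lemma decomp:
  assumes "is_tree T" "length \<sigma> \<le> l1" "l1 \<le> l2"
  shows "extp T P \<sigma> l2 = (\<Union>\<rho>\<in>extp T (\<lambda>_. True) \<sigma> l1. extp T P \<rho> l2)"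
proof
  show "extp T P \<sigma> l2 \<subseteq> (\<Union>\<rho>\<in>extp T (\<lambda>_. True) \<sigma> l1. extp T P \<rho> l2)"
  proof
    fix \<tau> assume t: "\<tau> \<in> extp T P \<sigma> l2"
    let ?r = "take l1 \<tau>"
    have "?r \<in> T" using t assms(1) unfolding extp_def is_tree_def by (auto intro: take_is_prefix)
    moreover have "length ?r = l1" using t assms by (auto simp: extp_def)
    moreover have "prefix \<sigma> ?r" using t assms by (auto simp: extp_def intro: take_pre)
    moreover have "\<tau> \<in> extp T P ?r l2" using t by (auto simp: extp_def intro: take_is_prefix)
    ultimately show "\<tau> \<in> (\<Union>\<rho>\<in>extp T (\<lambda>_. True) \<sigma> l1. extp T P \<rho> l2)"
      by (auto simp: extp_def)
  qed
next
  show "(\<Union>\<rho>\<in>extp T (\<lambda>_. True) \<sigma> l1. extp T P \<rho> l2) \<subseteq> extp T P \<sigma> l2"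
    by (auto simp: extp_def intro: prefix_order.order_trans)
qed

lemma card_decomp:
  assumes "finite T" "is_tree T" "length \<sigma> \<le> l1" "l1 \<le> l2"
  shows "card (extp T P \<sigma> l2) = (\<Sum>\<rho>\<in>extp T (\<lambda>_. True) \<sigma> l1. card (extp T P \<rho> l2))"
proof -
  have fin: "finite (extp T Q r l)" for Q r l using assms(1) by (simp add: extp_def)
  have disj: "\<forall>i\<in>extp T (\<lambda>_. True) \<sigma> l1. \<forall>j\<in>extp T (\<lambda>_. True) \<sigma> l1. i \<noteq> j \<longrightarrow>
      extp T P i l2 \<inter> extp T P j l2 = {}"
    by (auto simp: extp_def dest: pre_cmp_le pre_eq)
  show ?thesis unfolding decomp[OF assms(2-4), of P]
    by (rule card_UN_disjoint[OF fin]) (use fin disj in auto)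
qed

lemma consec_insert:
  assumes "finite Y" "Y \<noteq> {}" "x0 < Min Y" "consec (insert x0 Y) x y"
  shows "(x = x0 \<and> y = Min Y) \<or> consec Y x y"
proof (cases "x = x0")
  case True
  have yY: "y \<in> Y" using assms(4) True by (auto simp: consec_def)
  have "Min Y \<le> y" using yY assms(1) by simp
  moreover have "\<not> Min Y < y" using assms True Min_in[OF assms(1,2)] by (auto simp: consec_def)
  ultimately show ?thesis using True by simp
next
  case False
  have xY: "x \<in> Y" using assms(4) False by (auto simp: consec_def)
  have "Min Y \<le> x" using xY assms(1) by simp
  hence "y \<in> Y" using assms(3,4) by (auto simp: consec_def)
  thus ?thesis using assms(4) xY by (auto simp: consec_def)
qed

lemma glue:
  assumes q1: "quasistrong Y S1" and q2: "quasistrong Y S2" and fY: "finite Y" "Y \<noteq> {}"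
    and mY: "Min Y = length \<rho>1" and len: "length \<rho>1 = length \<rho>2" and ne: "\<rho>1 \<noteq> \<rho>2"
    and in1: "\<rho>1 \<in> S1" and in2: "\<rho>2 \<in> S2"
    and c1: "\<forall>\<rho>\<in>S1. prefix \<rho> \<rho>1 \<or> prefix \<rho>1 \<rho>"
    and c2: "\<forall>\<rho>\<in>S2. prefix \<rho> \<rho>2 \<or> prefix \<rho>2 \<rho>"
    and p1: "prefix \<sigma> \<rho>1" and p2: "prefix \<sigma> \<rho>2" and lt: "length \<sigma> < length \<rho>1"
  shows "quasistrong (insert (length \<sigma>) Y) ({\<rho>. prefix \<rho> \<sigma>} \<union> S1 \<union> S2)"
proof -
  let ?S = "{\<rho>. prefix \<rho> \<sigma>} \<union> S1 \<union> S2"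
  have ge: "y \<in> Y \<Longrightarrow> length \<rho>1 \<le> y" for y using mY fY by (metis Min_le)
  have "finite {\<rho>. prefix \<rho> \<sigma>}"
    by (rule finite_subset[of _ "set (prefixes \<sigma>)"]) auto
  hence fin: "finite ?S" using q1 q2 by (auto simp: quasistrong_def)
  have tr: "is_tree ?S" using q1 q2 unfolding quasistrong_def is_tree_def
    by (auto intro: prefix_order.order_trans)
  have lv: "\<forall>x\<in>insert (length \<sigma>) Y. \<exists>s\<in>?S. length s = x" using q1 q2 by (auto simp: quasistrong_def)
  have side1: "False" if "s \<in> S1" "t \<in> S2" "prefix s t" "length \<rho>1 \<le> length s" for s t
  proof -
    have a: "prefix \<rho>1 s" using c1 that cmp_prefix by blast
    have "length \<rho>2 \<le> length t" using a that(3) len prefix_length_le by (metis le_trans)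
    hence b: "prefix \<rho>2 t" using c2 that cmp_prefix by blast
    have "prefix \<rho>1 t" using a that(3) prefix_order.order_trans by blast
    thus False using b len ne same_len_pre by metis
  qed
  have side2: "False" if "s \<in> S2" "t \<in> S1" "prefix s t" "length \<rho>1 \<le> length s" for s t
  proof -
    have a: "prefix \<rho>2 s" using c2 that cmp_prefix len by metis
    have "length \<rho>1 \<le> length t" using a that(3) len prefix_length_le by (metis le_trans)
    hence b: "prefix \<rho>1 t" using c1 that cmp_prefix by blast
    have "prefix \<rho>2 t" using a that(3) prefix_order.order_trans by blast
    thus False using b len ne same_len_pre by metis
  qed
  have cons: "\<exists>\<tau>1 \<tau>2. \<tau>1 \<noteq> \<tau>2 \<and> {\<tau>\<in>?S. length \<tau> = y \<and> prefix s \<tau>} = {\<tau>1, \<tau>2} \<and>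
              \<not> prefix \<tau>1 \<tau>2 \<and> \<not> prefix \<tau>2 \<tau>1"
    if cxy: "consec (insert (length \<sigma>) Y) x y" and sS: "s \<in> ?S" and ls: "length s = x" for x y s
  proof -
    have "length \<sigma> < Min Y" using mY lt by simp
    from consec_insert[OF fY this cxy] show ?thesis
    proof
      assume h: "x = length \<sigma> \<and> y = Min Y"
      have s\<sigma>: "s = \<sigma>"
      proof -
        consider "prefix s \<sigma>" | "s \<in> S1" | "s \<in> S2" using sS by blast
        thus ?thesis
        proof cases
          case 1 thus ?thesis using h ls pre_eq by auto
        next
          case 2
          have "prefix s \<rho>1" using c1 2 h ls lt cmp_prefix[of s \<rho>1] by (metis dual_order.strict_iff_not prefix_length_le)
          thus ?thesis using p1 h ls pre_cmp_le pre_eq by (metis order_refl)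
        next
          case 3
          have "prefix s \<rho>2" using c2 3 h ls lt len cmp_prefix[of s \<rho>2] by (metis dual_order.strict_iff_not prefix_length_le)
          thus ?thesis using p2 h ls pre_cmp_le pre_eq by (metis order_refl)
        qed
      qed
      have "{\<tau>\<in>?S. length \<tau> = y \<and> prefix s \<tau>} = {\<rho>1, \<rho>2}"
      proof
        show "{\<rho>1, \<rho>2} \<subseteq> {\<tau>\<in>?S. length \<tau> = y \<and> prefix s \<tau>}" using in1 in2 p1 p2 s\<sigma> h mY len by auto
      next
        show "{\<tau>\<in>?S. length \<tau> = y \<and> prefix s \<tau>} \<subseteq> {\<rho>1, \<rho>2}"
        proof
          fix t assume t: "t \<in> {\<tau>\<in>?S. length \<tau> = y \<and> prefix s \<tau>}"
          hence "t \<in> S1 \<or> t \<in> S2" using h mY lt prefix_length_le by fastforce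
          thus "t \<in> {\<rho>1, \<rho>2}"
          proof
            assume tS: "t \<in> S1"
            have "length t = length \<rho>1" using t h mY by simp
            hence "t = \<rho>1" using c1 tS pre_eq by (metis)
            thus ?thesis by simp
          next
            assume tS: "t \<in> S2"
            have "length t = length \<rho>2" using t h mY len by simp
            hence "t = \<rho>2" using c2 tS pre_eq by (metis)
            thus ?thesis by simp
          qed
        qed
      qed
      thus ?thesis using ne len pre_eq by (metis prefix_length_le order_antisym)
    next
      assume h: "consec Y x y"
      have xY: "x \<in> Y" using h by (auto simp: consec_def)
      have lx: "length \<rho>1 \<le> x" using ge xY .
      have ns: "\<not> prefix s \<sigma>" using lx lt ls prefix_length_le by fastforce
      have yY: "y \<in> Y" "x < y" using h by (auto simp: consec_def)
      consider "s \<in> S1" | "s \<in> S2" using sS ns by blast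
      thus ?thesis
      proof cases
        case 1
        have eq: "{\<tau>\<in>?S. length \<tau> = y \<and> prefix s \<tau>} = {\<tau>\<in>S1. length \<tau> = y \<and> prefix s \<tau>}"
          using side1[OF 1] lx ls yY lt prefix_length_le by fastforce
        show ?thesis unfolding eq using q1 h 1 ls by (auto simp: quasistrong_def)
      next
        case 2
        have eq: "{\<tau>\<in>?S. length \<tau> = y \<and> prefix s \<tau>} = {\<tau>\<in>S2. length \<tau> = y \<and> prefix s \<tau>}"
          using side2[OF 2] lx ls yY lt prefix_length_le by fastforce
        show ?thesis unfolding eq using q2 h 2 ls by (auto simp: quasistrong_def)
      qed
    qed
  qed
  show ?thesis unfolding quasistrong_def using fin tr lv cons by blast
qed

locale SX =
  fixes X :: "nat set"
  assumes finX: "finite X" and neX: "X \<noteq> {}"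
begin

abbreviation "xs \<equiv> sorted_list_of_set X"
abbreviation "n \<equiv> card X"

lemma len_xs: "length xs = n" by simp
lemma set_xs: "set xs = X" using finX by simp
lemma npos: "0 < n" using finX neX card_gt_0_iff by blast

lemma mono_lt: "i < j \<Longrightarrow> j < n \<Longrightarrow> xs!i < xs!j"
  using sorted_wrt_nth_less[OF strict_sorted_list_of_set] by simp

lemma mono_le: "i \<le> j \<Longrightarrow> j < n \<Longrightarrow> xs!i \<le> xs!j"
  using mono_lt by (metis order_le_less)

lemma mono_iff: "i < n \<Longrightarrow> j < n \<Longrightarrow> xs!i < xs!j \<longleftrightarrow> i < j"
  using mono_lt mono_le by (metis leD linorder_neqE_nat order_less_imp_le)

lemma xs_in: "i < n \<Longrightarrow> xs!i \<in> X"
  using set_xs nth_mem len_xs by metis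

lemma in_xs: "x \<in> X \<Longrightarrow> \<exists>i<n. x = xs!i"
  using set_xs in_set_conv_nth len_xs by metis

lemma consec_idx: "Suc a < n \<Longrightarrow> consec X (xs!a) (xs!Suc a)"
  unfolding consec_def
proof (intro conjI)
  assume h: "Suc a < n"
  show "xs!a \<in> X" "xs!Suc a \<in> X" using h xs_in by auto
  show "xs!a < xs!Suc a" using h mono_lt by simp
  show "\<not> (\<exists>z\<in>X. xs!a < z \<and> z < xs!Suc a)"
  proof
    assume "\<exists>z\<in>X. xs!a < z \<and> z < xs!Suc a"
    then obtain j where j: "j < n" "xs!a < xs!j" "xs!j < xs!Suc a" using in_xs by blast
    hence "a < j" "j < Suc a" using mono_iff h by auto
    thus False by simp
  qed
qed

lemma Min_X: "Min X = xs!0"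
proof -
  obtain i where i: "i < n" "Min X = xs!i" using in_xs Min_in[OF finX neX] by blast
  have "Min X \<le> xs!0" using xs_in npos finX by simp
  moreover have "xs!0 \<le> xs!i" using mono_le i by simp
  ultimately show ?thesis using i by simp
qed

lemma Max_X: "Max X = xs!(n-1)"
proof -
  obtain i where i: "i < n" "Max X = xs!i" using in_xs Max_in[OF finX neX] by blast
  have "xs!(n-1) \<le> Max X" using xs_in npos finX by simp
  moreover have "xs!i \<le> xs!(n-1)" using mono_le i by simp
  ultimately show ?thesis using i by simp
qed

end

locale QS = SX X for X :: "nat set" +
  fixes T :: "bool list set"
  assumes qs: "quasistrong X T"
begin

lemma finT: "finite T" and treeT: "is_tree T" using qs by (auto simp: quasistrong_def)

lemma F1:
  assumes "\<sigma> \<in> T" "length \<sigma> = xs!a" "Suc a < n"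
  shows "card (extp T (\<lambda>_. True) \<sigma> (xs!Suc a)) = 2"
proof -
  have "consec X (xs!a) (xs!Suc a)" using consec_idx assms by simp
  then obtain t1 t2 where "t1 \<noteq> t2" "{\<tau>\<in>T. length \<tau> = xs!Suc a \<and> prefix \<sigma> \<tau>} = {t1, t2}"
    using qs assms unfolding quasistrong_def by blast
  thus ?thesis by (simp add: extp_def)
qed

lemma count:
  assumes "\<sigma> \<in> T" "length \<sigma> = xs!a" "a + d < n"
  shows "card (extp T (\<lambda>_. True) \<sigma> (xs!(a+d))) = 2^d"
  using assms(3)
proof (induction d)
  case 0
  have "extp T (\<lambda>_. True) \<sigma> (xs!a) = {\<sigma>}" using assms by (auto simp: extp_def) (metis pre_eq)
  thus ?case by simp
next
  case (Suc d)
  have "card (extp T (\<lambda>_. True) \<sigma> (xs!(a+Suc d))) =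
     (\<Sum>\<rho>\<in>extp T (\<lambda>_. True) \<sigma> (xs!(a+d)). card (extp T (\<lambda>_. True) \<rho> (xs!(a+Suc d))))"
    by (rule card_decomp[OF finT treeT]) (use assms Suc.prems mono_le in auto)
  also have "\<dots> = (\<Sum>\<rho>\<in>extp T (\<lambda>_. True) \<sigma> (xs!(a+d)). 2)"
    by (rule sum.cong) (use F1 Suc.prems in \<open>auto simp: extp_def\<close>)
  also have "\<dots> = 2 * 2^d" using Suc by simp
  finally show ?case by simp
qed

lemma cnt_le:
  assumes "\<sigma> \<in> T" "length \<sigma> = xs!a" "a + d < n"
  shows "card (extp T P \<sigma> (xs!(a+d))) \<le> 2^d"
proof -
  have "card (extp T P \<sigma> (xs!(a+d))) \<le> card (extp T (\<lambda>_. True) \<sigma> (xs!(a+d)))"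
    by (rule card_mono) (use finT in \<open>auto simp: extp_def\<close>)
  thus ?thesis using count[OF assms] by simp
qed

end

context QS begin

lemma step:
  assumes s: "\<sigma> \<in> T" "length \<sigma> = xs!a" and ab: "a + Suc s \<le> n - 1"
    and big: "card (extp T P \<sigma> (xs!(n-1))) * 2^s > 2^(n-1-a)"
  shows "\<exists>\<rho>1 \<rho>2. \<rho>1 \<in> extp T (\<lambda>_. True) \<sigma> (xs!(a+Suc s)) \<and> \<rho>2 \<in> extp T (\<lambda>_. True) \<sigma> (xs!(a+Suc s))
     \<and> \<rho>1 \<noteq> \<rho>2 \<and> card (extp T P \<rho>1 (xs!(n-1))) * 2^(Suc s) > 2^(n-1-(a+Suc s))
     \<and> card (extp T P \<rho>2 (xs!(n-1))) * 2^(Suc s) > 2^(n-1-(a+Suc s))"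
proof (rule ccontr)
  assume nex: "\<not> ?thesis"
  define b where "b = a + Suc s"
  define B where "B = extp T (\<lambda>_. True) \<sigma> (xs!b)"
  define M :: nat where "M = 2^(n-1-b)"
  define cnt where "cnt \<rho> = card (extp T P \<rho> (xs!(n-1)))" for \<rho>
  define G where "G = {\<rho>\<in>B. cnt \<rho> * 2^Suc s > M}"
  have finB: "finite B" using finT by (simp add: B_def extp_def)
  have GB: "G \<subseteq> B" by (auto simp: G_def)
  have cG: "card G \<le> 1"
  proof -
    have "\<forall>a1\<in>G. \<forall>a2\<in>G. a1 = a2" using nex unfolding G_def B_def M_def cnt_def b_def by blast
    thus ?thesis using card_le_Suc0_iff_eq[OF finite_subset[OF GB finB]] by simp
  qed
  have cB: "card B = 2^Suc s" unfolding B_def b_def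
    using count[OF s, of "Suc s"] ab npos by simp
  have bnd: "cnt \<rho> \<le> M" if "\<rho> \<in> B" for \<rho>
  proof -
    have "\<rho> \<in> T" "length \<rho> = xs!b" using that by (auto simp: B_def extp_def)
    from cnt_le[OF this, of "n - 1 - b" P] have "card (extp T P \<rho> (xs!(b + (n-1-b)))) \<le> 2^(n-1-b)"
      using ab npos b_def by simp
    moreover have "b + (n-1-b) = n - 1" using ab b_def by simp
    ultimately show ?thesis by (simp add: cnt_def M_def)
  qed
  have "cnt \<sigma> = (\<Sum>\<rho>\<in>B. cnt \<rho>)" unfolding cnt_def B_def
    by (rule card_decomp[OF finT treeT]) (use s ab b_def mono_le npos in auto)
  also have "\<dots> = (\<Sum>\<rho>\<in>G. cnt \<rho>) + (\<Sum>\<rho>\<in>B-G. cnt \<rho>)"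
    using sum.subset_diff[OF GB finB, of cnt] by simp
  finally have split: "cnt \<sigma> = (\<Sum>\<rho>\<in>G. cnt \<rho>) + (\<Sum>\<rho>\<in>B-G. cnt \<rho>)" .
  have s1: "(\<Sum>\<rho>\<in>G. cnt \<rho>) \<le> M"
  proof -
    have "(\<Sum>\<rho>\<in>G. cnt \<rho>) \<le> card G * M" using sum_bounded_above[of G cnt M] bnd GB by auto
    also have "\<dots> \<le> M" using cG by simp
    finally show ?thesis .
  qed
  have "(\<Sum>\<rho>\<in>B-G. cnt \<rho>) * 2^Suc s = (\<Sum>\<rho>\<in>B-G. cnt \<rho> * 2^Suc s)" by (simp add: sum_distrib_right)
  also have "\<dots> \<le> card (B-G) * M" using sum_bounded_above[of "B-G" "\<lambda>\<rho>. cnt \<rho> * 2^Suc s" M]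
    by (auto simp: G_def not_less)
  also have "\<dots> \<le> card B * M" using card_mono[OF finB, of "B-G"] by auto
  finally have "(\<Sum>\<rho>\<in>B-G. cnt \<rho>) * 2^Suc s \<le> 2^Suc s * M" using cB by simp
  hence s2: "(\<Sum>\<rho>\<in>B-G. cnt \<rho>) \<le> M" by simp
  have "cnt \<sigma> * 2^s \<le> 2 * M * 2^s" using split s1 s2 by simp
  also have "\<dots> = 2^(n-1-b + Suc s)" by (simp add: M_def power_add)
  also have "n-1-b + Suc s = n-1-a" using ab b_def by simp
  finally show False using big cnt_def by simp
qed

end

fun Gs :: "nat \<Rightarrow> nat \<Rightarrow> nat" where
  "Gs s 0 = 0"
| "Gs s (Suc m) = Suc s + Gs (Suc s) m"

fun Ys :: "nat list \<Rightarrow> nat \<Rightarrow> nat \<Rightarrow> nat \<Rightarrow> nat set" where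
  "Ys l a s 0 = {l!a}"
| "Ys l a s (Suc m) = insert (l!a) (Ys l (a + Suc s) (Suc s) m)"

lemma Ys_idx: "y \<in> Ys l a s m \<Longrightarrow> \<exists>b. a \<le> b \<and> b \<le> a + Gs s m \<and> y = l!b"
proof (induction m arbitrary: a s)
  case 0 thus ?case by auto
next
  case (Suc m)
  show ?case
  proof (cases "y = l!a")
    case True thus ?thesis by auto
  next
    case False
    hence "y \<in> Ys l (a + Suc s) (Suc s) m" using Suc.prems by simp
    from Suc.IH[OF this] obtain b where "a + Suc s \<le> b" "b \<le> a + Suc s + Gs (Suc s) m" "y = l!b"
      by blast
    thus ?thesis by (intro exI[of _ b]) auto
  qed
qed

lemma Ys_fin: "finite (Ys l a s m)"
  by (induction m arbitrary: a s) auto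

lemma Ys_self: "l!a \<in> Ys l a s m"
  by (cases m) auto

context SX begin

lemma Ys_sub: "a + Gs s m \<le> n - 1 \<Longrightarrow> Ys xs a s m \<subseteq> X"
proof
  fix y assume h: "a + Gs s m \<le> n - 1" "y \<in> Ys xs a s m"
  then obtain b where "b \<le> a + Gs s m" "y = xs!b" using Ys_idx[OF h(2)] by blast
  moreover have "b < n" using calculation h npos by linarith
  ultimately show "y \<in> X" using xs_in by simp
qed

lemma Ys_min: "a + Gs s m \<le> n - 1 \<Longrightarrow> Min (Ys xs a s m) = xs!a"
proof -
  assume h: "a + Gs s m \<le> n - 1"
  have "xs!a \<le> y" if yin: "y \<in> Ys xs a s m" for y
  proof -
    obtain b where "a \<le> b" "b \<le> a + Gs s m" "y = xs!b" using Ys_idx[OF yin] by blast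
    moreover have "b < n" using calculation h npos by linarith
    ultimately show ?thesis using mono_le by simp
  qed
  thus ?thesis using Ys_self Ys_fin Min_eqI by metis
qed

lemma Ys_card: "a + Gs s m \<le> n - 1 \<Longrightarrow> card (Ys xs a s m) = Suc m"
proof (induction m arbitrary: a s)
  case 0 thus ?case by simp
next
  case (Suc m)
  have h: "a + Suc s + Gs (Suc s) m \<le> n - 1" using Suc.prems by simp
  have "xs!a \<notin> Ys xs (a + Suc s) (Suc s) m"
  proof
    assume "xs!a \<in> Ys xs (a + Suc s) (Suc s) m"
    hence "xs!(a + Suc s) \<le> xs!a" using Ys_min[OF h] Ys_fin by (metis Min_le)
    moreover have "xs!a < xs!(a + Suc s)" using mono_lt h npos by simp
    ultimately show False by simp
  qed
  thus ?case using Suc.IH[OF h] Ys_fin by simp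
qed


end

context QS begin

lemma build:
  assumes "a + Gs s m \<le> n - 1" "\<sigma> \<in> T" "length \<sigma> = xs!a"
    "card (extp T P \<sigma> (xs!(n-1))) * 2^s > 2^(n-1-a)"
  shows "\<exists>S. S \<subseteq> T \<and> quasistrong (Ys xs a s m) S \<and> \<sigma> \<in> S \<and> (\<forall>\<rho>\<in>S. prefix \<rho> \<sigma> \<or> prefix \<sigma> \<rho>) \<and>
     (\<forall>\<rho>. is_leaf S \<rho> \<longrightarrow> (\<exists>\<tau>\<in>T. length \<tau> = xs!(n-1) \<and> prefix \<rho> \<tau> \<and> P \<tau>))"
  using assms
proof (induction m arbitrary: a s \<sigma>)
  case 0
  let ?S = "{\<rho>. prefix \<rho> \<sigma>}"
  have finS: "finite ?S" by (rule finite_subset[of _ "set (prefixes \<sigma>)"]) auto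
  have sub: "?S \<subseteq> T" using 0 treeT by (auto simp: is_tree_def)
  have qsS: "quasistrong (Ys xs a s 0) ?S"
    unfolding quasistrong_def using finS 0
    by (auto simp: is_tree_def consec_def intro: prefix_order.order_trans)
  have "card (extp T P \<sigma> (xs!(n-1))) \<noteq> 0" using 0 by (metis mult_is_0 not_less_zero)
  then obtain \<tau> where \<tau>: "\<tau> \<in> extp T P \<sigma> (xs!(n-1))" by (metis card.empty equals0I)
  have leaf: "is_leaf ?S \<rho> \<Longrightarrow> \<rho> = \<sigma>" for \<rho>
    unfolding is_leaf_def strict_prefix_def by auto
  show ?case
    by (rule exI[of _ ?S]) (use sub qsS leaf \<tau> in \<open>auto simp: extp_def\<close>)
next
  case (Suc m)
  have h: "a + Suc s + Gs (Suc s) m \<le> n - 1" using Suc.prems by simp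
  hence ab: "a + Suc s \<le> n - 1" by simp
  obtain \<rho>1 \<rho>2 where r1: "\<rho>1 \<in> extp T (\<lambda>_. True) \<sigma> (xs!(a+Suc s))"
    and r2: "\<rho>2 \<in> extp T (\<lambda>_. True) \<sigma> (xs!(a+Suc s))" and ne: "\<rho>1 \<noteq> \<rho>2"
    and b1: "card (extp T P \<rho>1 (xs!(n-1))) * 2^(Suc s) > 2^(n-1-(a+Suc s))"
    and b2: "card (extp T P \<rho>2 (xs!(n-1))) * 2^(Suc s) > 2^(n-1-(a+Suc s))"
    using step[OF Suc.prems(2,3) ab Suc.prems(4)] by blast
  have r1': "\<rho>1 \<in> T" "length \<rho>1 = xs!(a+Suc s)" "prefix \<sigma> \<rho>1" using r1 by (auto simp: extp_def)
  have r2': "\<rho>2 \<in> T" "length \<rho>2 = xs!(a+Suc s)" "prefix \<sigma> \<rho>2" using r2 by (auto simp: extp_def)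
  obtain S1 where S1: "S1 \<subseteq> T" "quasistrong (Ys xs (a+Suc s) (Suc s) m) S1" "\<rho>1 \<in> S1"
    "\<forall>\<rho>\<in>S1. prefix \<rho> \<rho>1 \<or> prefix \<rho>1 \<rho>"
    "\<forall>\<rho>. is_leaf S1 \<rho> \<longrightarrow> (\<exists>\<tau>\<in>T. length \<tau> = xs!(n-1) \<and> prefix \<rho> \<tau> \<and> P \<tau>)"
    using Suc.IH[OF h r1'(1,2) b1] by blast
  obtain S2 where S2: "S2 \<subseteq> T" "quasistrong (Ys xs (a+Suc s) (Suc s) m) S2" "\<rho>2 \<in> S2"
    "\<forall>\<rho>\<in>S2. prefix \<rho> \<rho>2 \<or> prefix \<rho>2 \<rho>"
    "\<forall>\<rho>. is_leaf S2 \<rho> \<longrightarrow> (\<exists>\<tau>\<in>T. length \<tau> = xs!(n-1) \<and> prefix \<rho> \<tau> \<and> P \<tau>)"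
    using Suc.IH[OF h r2'(1,2) b2] by blast
  let ?S = "{\<rho>. prefix \<rho> \<sigma>} \<union> S1 \<union> S2"
  have lt: "length \<sigma> < length \<rho>1" using Suc.prems(3) r1'(2) mono_lt ab npos by simp
  have qsS: "quasistrong (Ys xs a s (Suc m)) ?S"
    unfolding Ys.simps Suc.prems(3)[symmetric]
  proof (rule glue[OF S1(2) S2(2) Ys_fin])
    show "Ys xs (a + Suc s) (Suc s) m \<noteq> {}" using Ys_self by blast
    show "Min (Ys xs (a + Suc s) (Suc s) m) = length \<rho>1" using Ys_min[OF h] r1' by simp
    show "length \<rho>1 = length \<rho>2" using r1' r2' by simp
    show "\<rho>1 \<noteq> \<rho>2" by fact
    show "\<rho>1 \<in> S1" "\<rho>2 \<in> S2" using S1 S2 by auto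
    show "\<forall>\<rho>\<in>S1. prefix \<rho> \<rho>1 \<or> prefix \<rho>1 \<rho>" "\<forall>\<rho>\<in>S2. prefix \<rho> \<rho>2 \<or> prefix \<rho>2 \<rho>" using S1 S2 by auto
    show "prefix \<sigma> \<rho>1" "prefix \<sigma> \<rho>2" using r1' r2' by auto
    show "length \<sigma> < length \<rho>1" by fact
  qed
  have sub: "?S \<subseteq> T" using Suc.prems(2) treeT S1 S2 by (auto simp: is_tree_def)
  have cmp1: "prefix \<rho> \<sigma> \<or> prefix \<sigma> \<rho>" if "prefix \<rho> r \<or> prefix r \<rho>" "prefix \<sigma> r" for \<rho> r
    using that prefix_same_cases[of \<rho> r \<sigma>] prefix_order.order_trans[of \<sigma> r \<rho>] by blast
  have cmp: "\<forall>\<rho>\<in>?S. prefix \<rho> \<sigma> \<or> prefix \<sigma> \<rho>"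
    using S1(4) S2(4) r1'(3) r2'(3) cmp1 by blast
  have leaf: "\<exists>\<tau>\<in>T. length \<tau> = xs!(n-1) \<and> prefix \<rho> \<tau> \<and> P \<tau>" if lf: "is_leaf ?S \<rho>" for \<rho>
  proof -
    have inS: "\<rho> \<in> ?S" and mx: "\<not> (\<exists>\<tau>\<in>?S. strict_prefix \<rho> \<tau>)" using lf by (auto simp: is_leaf_def)
    have np: "\<not> prefix \<rho> \<sigma>"
    proof
      assume "prefix \<rho> \<sigma>"
      moreover have "length \<rho> < length \<rho>1" using calculation lt prefix_length_le by (metis le_less_trans)
      ultimately have "strict_prefix \<rho> \<rho>1" using r1'(3) unfolding strict_prefix_def
        using prefix_order.order_trans by blast
      thus False using mx S1(3) by blast
    qed
    show ?thesis
    proof (cases "\<rho> \<in> S1")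
      case True
      hence "is_leaf S1 \<rho>" using mx by (auto simp: is_leaf_def)
      thus ?thesis using S1(5) by blast
    next
      case False
      hence "\<rho> \<in> S2" using inS np by blast
      hence "is_leaf S2 \<rho>" using mx by (auto simp: is_leaf_def)
      thus ?thesis using S2(5) by blast
    qed
  qed
  show ?case
    by (rule exI[of _ ?S]) (use qsS sub cmp leaf in auto)
qed

end

definition e0 :: "nat \<Rightarrow> nat" where "e0 k = (LEAST e. k < 2^e)"

lemma e0_props: "k < 2^(e0 k)" "e0 k \<le> k"
proof -
  have "k < 2^k" by (rule less_exp)
  thus "k < 2^(e0 k)" "e0 k \<le> k" unfolding e0_def by (auto intro: LeastI[of "\<lambda>e. k < 2^e" k] Least_le)
qed

lemma e0_pos: "1 \<le> k \<Longrightarrow> 1 \<le> e0 k"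
  using e0_props(1)[of k] by (cases "e0 k") auto

lemma rat_cmp: "1 \<le> k \<Longrightarrow> ((1::rat) / 2^j < 1 / of_nat k) \<longleftrightarrow> k < 2^j"
proof -
  assume k: "1 \<le> k"
  have "((1::rat) / 2^j < 1 / of_nat k) \<longleftrightarrow> (of_nat k :: rat) < 2^j"
    using k by (simp add: divide_simps)
  also have "\<dots> \<longleftrightarrow> k < 2^j" by (metis of_nat_less_iff of_nat_numeral of_nat_power)
  finally show ?thesis .
qed

lemma eexp_k: assumes k: "1 \<le> k" shows "eexp (1 / of_nat k) = int (e0 k)"
  unfolding eexp_def
proof (rule Least_equality)
  have "power_int (2::rat) (- int (e0 k)) = 1 / 2^(e0 k)"
    by (simp add: power_int_minus divide_inverse)
  thus "power_int (2::rat) (- int (e0 k)) < 1 / of_nat k" using rat_cmp[OF k] e0_props(1) by simp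
next
  fix y :: int assume h: "power_int (2::rat) (- y) < 1 / of_nat k"
  show "int (e0 k) \<le> y"
  proof (cases "y < 0")
    case True
    have "power_int (2::rat) (- y) = 2 ^ nat (- y)"
      using True by (metis less_le neg_0_less_iff_less nat_0_le power_int_of_nat)
    hence "1 \<le> power_int (2::rat) (- y)" by simp
    moreover have "1 / of_nat k \<le> (1::rat)" using k by simp
    ultimately show ?thesis using h by simp
  next
    case False
    then obtain j where j: "y = int j" by (metis nonneg_eq_int not_less)
    have "power_int (2::rat) (- y) = 1 / 2^j" by (simp add: j power_int_minus divide_inverse)
    hence "k < 2^j" using h rat_cmp[OF k] by simp
    hence "e0 k \<le> j" unfolding e0_def by (rule Least_le)
    thus ?thesis using j by simp
  qed
qed

definition ff :: "int \<Rightarrow> int \<Rightarrow> int" where "ff e m = (m - 1) * e + ((m - 1) * m) div 2"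

lemma gfun_k: "1 \<le> k \<Longrightarrow> gfun m (1 / of_nat k) = ff (int (e0 k)) m"
  by (simp add: gfun_def ff_def eexp_k)

lemma even2: "((m::int) - 1) * m div 2 * 2 = (m - 1) * m"
  by simp

lemma ff_mono: assumes "0 \<le> m" "m \<le> m'" "0 \<le> e" shows "ff e m \<le> ff e m'"
proof -
  have a: "(m - 1) * e \<le> (m' - 1) * e" using assms by (simp add: mult_right_mono)
  have "(m - 1) * m \<le> (m' - 1) * m'"
  proof (cases "m = 0")
    case True
    have "0 \<le> (m' - 1) * m'"
    proof (cases "m' = 0")
      case False thus ?thesis using assms by (intro mult_nonneg_nonneg) auto
    qed simp
    thus ?thesis using True by simp
  next
    case False
    hence "1 \<le> m" using assms by simp
    hence "(m - 1) * m \<le> (m' - 1) * m" using assms by (simp add: mult_right_mono)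
    also have "\<dots> \<le> (m' - 1) * m'" using assms \<open>1 \<le> m\<close> by (simp add: mult_left_mono)
    finally show ?thesis .
  qed
  hence "(m - 1) * m div 2 \<le> (m' - 1) * m' div 2" by (rule zdiv_mono1) simp
  thus ?thesis using a by (simp add: ff_def)
qed

lemma ff_sq: assumes "0 \<le> B" "2 * e \<le> B" "0 \<le> e" shows "ff e B \<le> B^2"
proof -
  have a: "2 * ((B - 1) * B div 2) = (B - 1) * B" using even2[of B] by simp
  have b: "2 * ((B - 1) * e) \<le> (B - 1) * B"
  proof (cases "B = 0")
    case True thus ?thesis using assms by simp
  next
    case False
    hence "0 \<le> B - 1" using assms by simp
    thus ?thesis using assms mult_left_mono[of "2*e" B "B - 1"] by (simp add: algebra_simps)
  qed
  have "(B - 1) * B \<le> B * B" using assms by (simp add: mult_right_mono)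
  hence "2 * ff e B \<le> 2 * B^2" using a b by (simp add: ff_def power2_eq_square algebra_simps)
  thus ?thesis by simp
qed

lemma gbar_ge2: "1 \<le> k \<Longrightarrow> 2 \<le> gbar x k i"
proof (induction i)
  case 0 thus ?case by simp
next
  case (Suc i)
  let ?m = "gbar x k i" and ?e = "int (e0 k)"
  have e1: "1 \<le> ?e" using e0_pos Suc.prems by simp
  have "1 * 1 \<le> (?m - 1) * ?e" using Suc e1 by (intro mult_mono) auto
  moreover have "1 * 2 \<le> (?m - 1) * ?m" using Suc by (intro mult_mono) auto
  hence "(2::int) div 2 \<le> (?m - 1) * ?m div 2" using zdiv_mono1[of 2 "(?m - 1) * ?m" 2] by simp
  hence "1 \<le> (?m - 1) * ?m div 2" by simp
  ultimately show ?case using gfun_k[OF Suc.prems] by (simp add: ff_def)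
qed

lemma part1: assumes "0 < k" "k \<le> x" shows "gbar x k i \<le> int (x + k + i + 1) ^ (2 ^ i)"
proof (induction i)
  case 0 thus ?case by simp
next
  case (Suc i)
  let ?A = "int (x + k + i + 1)" and ?e = "int (e0 k)"
  define B where "B = (?A + 1) ^ (2^i)"
  have k1: "1 \<le> k" using assms by simp
  have "gbar x k i \<le> ?A ^ (2^i)" by fact
  also have "\<dots> \<le> B" unfolding B_def by (rule power_mono) auto
  finally have gB: "gbar x k i \<le> B" .
  have "?A + 1 \<le> B" unfolding B_def by (rule self_le_power) auto
  moreover have "?e \<le> int k" using e0_props(2) by simp
  ultimately have eB: "2 * ?e \<le> B" using assms by simp
  have "gbar x k (Suc i) = ff ?e (gbar x k i)" using gfun_k[OF k1] by simp
  also have "\<dots> \<le> ff ?e B" by (rule ff_mono) (use gB gbar_ge2[OF k1, of x i] in auto)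
  also have "\<dots> \<le> B^2" by (rule ff_sq) (use eB B_def in auto)
  also have "B^2 = int (x + k + Suc i + 1) ^ (2 ^ Suc i)"
    unfolding B_def by (simp add: power_mult[symmetric] mult.commute)
  finally show ?case .
qed

lemma Gs_closed: "2 * Gs s m = 2 * m * s + m * (m + 1)"
proof (induction m arbitrary: s)
  case (Suc m)
  have "2 * Gs s (Suc m) = 2 * Suc s + 2 * Gs (Suc s) m" by simp
  also have "\<dots> = 2 * Suc s + (2 * m * Suc s + m * (m + 1))" using Suc.IH by simp
  finally show ?case by (simp add: algebra_simps)
qed simp

lemma part2:
  assumes k: "1 \<le> k"
  shows "finite X \<Longrightarrow> X \<noteq> {} \<Longrightarrow> gbar (Min X) k i \<le> int (card X) + 1 \<Longrightarrow> persistent k i X"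
proof (induction i arbitrary: X)
  case 0
  thus ?case using k by (simp add: omega_large_def)
next
  case (Suc i)
  interpret SX X using Suc.prems by unfold_locales auto
  define m where "m = gbar (Min X) k i"
  define e where "e = e0 k"
  define mm where "mm = nat (m - 2)"
  have m2: "2 \<le> m" using gbar_ge2[OF k] m_def by simp
  have mmm: "m = int mm + 2" using m2 mm_def by simp
  have e1: "1 \<le> e" using e0_pos[OF k] e_def by simp
  have hyp: "ff (int e) m \<le> int n + 1" using Suc.prems(3) gfun_k[OF k] m_def e_def by simp
  have Gb: "Gs e mm \<le> n - 1"
  proof -
    have "2 * ff (int e) m = 2 * (m - 1) * int e + (m - 1) * m"
      unfolding ff_def using even2[of m] by (simp add: algebra_simps)
    also have "\<dots> = 2 * int (Gs e mm) + 2 * int e + 2 * int mm + 2"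
    proof -
      have "int (2 * Gs e mm) = int (2 * mm * e + mm * (mm + 1))" using Gs_closed by metis
      thus ?thesis unfolding mmm by (simp add: algebra_simps)
    qed
    finally have eq: "2 * ff (int e) m = 2 * int (Gs e mm) + 2 * int e + 2 * int mm + 2" .
    have "2 * ff (int e) m \<le> 2 * (int n + 1)" using hyp by simp
    hence "2 * int (Gs e mm) + 2 * int e + 2 * int mm + 2 \<le> 2 * (int n + 1)" unfolding eq .
    moreover have "1 \<le> int e" using e1 by simp
    moreover have "0 \<le> int mm" by simp
    ultimately have "int (Gs e mm) + 1 \<le> int n" by presburger
    hence "Gs e mm + 1 \<le> n" by linarith
    thus ?thesis by simp
  qed
  define Y where "Y = Ys xs 0 e mm"
  have Gb0: "0 + Gs e mm \<le> n - 1" using Gb by simp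
  have YX: "Y \<subseteq> X" using Ys_sub[OF Gb0] Y_def by simp
  have finY: "finite Y" "Y \<noteq> {}" using Ys_fin Ys_self[of xs 0 e mm] Y_def by auto
  have minY: "Min Y = Min X" using Ys_min[OF Gb0] Min_X Y_def by simp
  have cardY: "card Y = Suc mm" using Ys_card[OF Gb0] Y_def by simp
  have pY: "persistent k i Y"
    by (rule Suc.IH[OF finY]) (use minY cardY mmm m_def in simp)
  have tree: "\<exists>c<k. \<exists>S. S \<subseteq> T \<and> quasistrong Y S \<and>
              (\<forall>\<sigma>. is_leaf S \<sigma> \<longrightarrow> (\<exists>\<tau>\<in>T. length \<tau> = Max X \<and> prefix \<sigma> \<tau> \<and> C \<tau> = c))"
    if qT: "quasistrong X T" and col: "\<forall>\<sigma>\<in>T. length \<sigma> = Max X \<longrightarrow> C \<sigma> < k" for T C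
  proof -
    interpret QS X T using qT by unfold_locales
    define N where "N = n - 1"
    have nN: "0 + N < n" using npos N_def by simp
    obtain \<sigma>0 where s0: "\<sigma>0 \<in> T" "length \<sigma>0 = xs!0"
      using qT Min_X Min_in[OF finX neX] unfolding quasistrong_def by metis
    define cnt where "cnt c = card (extp T (\<lambda>\<tau>. C \<tau> = c) \<sigma>0 (xs!N))" for c
    have all: "card (extp T (\<lambda>_. True) \<sigma>0 (xs!N)) = 2^N"
      using count[OF s0 nN] by simp
    have un: "extp T (\<lambda>_. True) \<sigma>0 (xs!N) = (\<Union>c\<in>{..<k}. extp T (\<lambda>\<tau>. C \<tau> = c) \<sigma>0 (xs!N))"
      using col Max_X N_def by (auto simp: extp_def)
    have "card (\<Union>c\<in>{..<k}. extp T (\<lambda>\<tau>. C \<tau> = c) \<sigma>0 (xs!N)) = (\<Sum>c<k. cnt c)"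
      unfolding cnt_def by (rule card_UN_disjoint) (use finT in \<open>auto simp: extp_def\<close>)
    hence sumc: "(\<Sum>c<k. cnt c) = 2^N" using all un by simp
    have "\<exists>c<k. 2^N \<le> cnt c * k"
    proof (rule ccontr)
      assume "\<not> ?thesis"
      hence "\<forall>c\<in>{..<k}. cnt c * k < 2^N" by auto
      hence "(\<Sum>c<k. cnt c * k) < (\<Sum>c<k. (2::nat)^N)"
        using k by (intro sum_strict_mono) (auto simp: lessThan_empty_iff)
      moreover have "(\<Sum>c<k. cnt c * k) = (\<Sum>c<k. cnt c) * k" by (simp add: sum_distrib_right)
      ultimately show False using sumc by simp
    qed
    then obtain c where c: "c < k" "2^N \<le> cnt c * k" by blast
    have "0 < cnt c" using c by (metis mult_is_0 not_le power_eq_0_iff zero_neq_numeral le_zero_eq)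
    moreover have "k < 2^e" using e0_props(1)[of k] e_def by simp
    ultimately have lt: "cnt c * k < cnt c * 2^e" by simp
    have "2^N < cnt c * 2^e" using c(2) lt by linarith
    hence big: "card (extp T (\<lambda>\<tau>. C \<tau> = c) \<sigma>0 (xs!(n-1))) * 2^e > 2^(n-1-0)"
      unfolding cnt_def N_def by simp
    obtain S where S: "S \<subseteq> T" "quasistrong (Ys xs 0 e mm) S"
      "\<forall>\<rho>. is_leaf S \<rho> \<longrightarrow> (\<exists>\<tau>\<in>T. length \<tau> = xs!(n-1) \<and> prefix \<rho> \<tau> \<and> C \<tau> = c)"
      using build[OF Gb0 s0 big] by blast
    show ?thesis using S c Y_def Max_X by auto
  qed
  show ?case using Suc.prems(1,2) YX pY tree by auto
qed

theorem lemma2p7: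
  fixes i :: nat
  shows "(\<forall>x k. 0 < k \<and> k \<le> x \<longrightarrow> gbar x k i \<le> int (x + k + i + 1) ^ (2 ^ i)) \<and>
         (\<forall>k X. 1 \<le> k \<longrightarrow> finite X \<longrightarrow> X \<noteq> {} \<longrightarrow> int (card X) > gbar (Min X) k i
             \<longrightarrow> persistent k i X)"
  using part1 part2 by fastforce

end
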